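(* Let $G$ be a finite undirected graph, $\tau\ge1$ an integer, $e=(u,v)\in E(G)$, and let $G'$ be the graph obtained from $G$ by deleting the edge $e$. Let $e'=(u',v')$ be an edge of $G'$ with $u',v'\in\Delta_\tau(e,G)$. If $\mathrm{dis}_G(u,u')=\mathrm{dis}_{G'}(u,u')$, $\mathrm{dis}_G(u,v')=\mathrm{dis}_{G'}(u,v')$, $\mathrm{dis}_G(v,u')=\mathrm{dis}_{G'}(v,u')$ and $\mathrm{dis}_G(v,v')=\mathrm{dis}_{G'}(v,v')$, then $\mathrm{sup}_\tau(e',G)=\mathrm{sup}_\tau(e',G')$.
   Context: Graphs are finite, simple, undirected and unweighted; paths may repeat vertices and their length is the number of edges. $\mathrm{dis}_H(x,y)$ is the length of a shortest path between $x$ and $y$ in $H$ ($\infty$ if none). For vertices $v,u$ of a graph $H$, $u$ is $\tau$-hop reachable from $v$ in $H$ if there is a path between them in $H$ of length at most $\tau$. $N_\tau(v,H)$ is the set of vertices $u\ne v$ that are $\tau$-hop reachable from $v$ in $H$. For an edge $e=(u,v)$ of $H$, $\Delta_\tau(e,H)=N_\tau(u,H)\cap N_\tau(v,H)$ and $\mathrm{sup}_\tau(e,H)=|\Delta_\tau(e,H)|$. *)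

theory Defs
  imports Main "HOL-Library.Extended_Nat"
begin

definition simple_graph :: "'a set \<Rightarrow> 'a set set \<Rightarrow> bool" where
  "simple_graph V E \<longleftrightarrow> finite V \<and> (\<forall>e\<in>E. \<exists>a b. e = {a, b} \<and> a \<in> V \<and> b \<in> V \<and> a \<noteq> b)"

text \<open>A walk (path possibly repeating vertices), given as its nonempty vertex list;
  its length is the number of edges, i.e. length xs - 1.\<close>
definition walk :: "'a set \<Rightarrow> 'a set set \<Rightarrow> 'a list \<Rightarrow> bool" where
  "walk V E xs \<longleftrightarrow> xs \<noteq> [] \<and> set xs \<subseteq> V \<and>
     (\<forall>i. Suc i < length xs \<longrightarrow> {xs ! i, xs ! Suc i} \<in> E)"

text \<open>Shortest path distance; infinity if no path.\<close>
definition dis :: "'a set \<Rightarrow> 'a set set \<Rightarrow> 'a \<Rightarrow> 'a \<Rightarrow> enat" where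
  "dis V E x y = (INF xs \<in> {xs. walk V E xs \<and> hd xs = x \<and> last xs = y}. enat (length xs - 1))"

definition hop_reachable :: "'a set \<Rightarrow> 'a set set \<Rightarrow> nat \<Rightarrow> 'a \<Rightarrow> 'a \<Rightarrow> bool" where
  "hop_reachable V E \<tau> v u \<longleftrightarrow>
     (\<exists>xs. walk V E xs \<and> hd xs = v \<and> last xs = u \<and> length xs - 1 \<le> \<tau>)"

definition hopN :: "'a set \<Rightarrow> 'a set set \<Rightarrow> nat \<Rightarrow> 'a \<Rightarrow> 'a set" where
  "hopN V E \<tau> v = {u. u \<noteq> v \<and> hop_reachable V E \<tau> v u}"

definition Delta :: "'a set \<Rightarrow> 'a set set \<Rightarrow> nat \<Rightarrow> 'a \<Rightarrow> 'a \<Rightarrow> 'a set" where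
  "Delta V E \<tau> u v = hopN V E \<tau> u \<inter> hopN V E \<tau> v"

definition sup_tau :: "'a set \<Rightarrow> 'a set set \<Rightarrow> nat \<Rightarrow> 'a \<Rightarrow> 'a \<Rightarrow> nat" where
  "sup_tau V E \<tau> u v = card (Delta V E \<tau> u v)"

end

theory Submission
  imports Defs
begin

lemma walk_single: "walk V E [a] \<longleftrightarrow> a \<in> V"
  by (auto simp: walk_def)

lemma walk_Cons2: "walk V E (a # b # zs) \<longleftrightarrow> a \<in> V \<and> {a,b} \<in> E \<and> walk V E (b # zs)"
proof
  assume "walk V E (a # b # zs)"
  then show "a \<in> V \<and> {a,b} \<in> E \<and> walk V E (b # zs)"
    unfolding walk_def by (auto dest: spec[where x="Suc _"] spec[where x=0])
next
  assume h: "a \<in> V \<and> {a,b} \<in> E \<and> walk V E (b # zs)"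
  show "walk V E (a # b # zs)"
    unfolding walk_def
  proof (intro conjI allI impI)
    fix i assume "Suc i < length (a # b # zs)"
    then show "{(a # b # zs) ! i, (a # b # zs) ! Suc i} \<in> E"
      using h unfolding walk_def by (cases i) auto
  qed (use h in \<open>auto simp: walk_def\<close>)
qed

lemma walk_rev: assumes "walk V E xs" shows "walk V E (rev xs)"
  unfolding walk_def
proof (intro conjI allI impI)
  fix i assume i: "Suc i < length (rev xs)"
  define j where "j = length xs - 2 - i"
  have j: "Suc j < length xs" "length xs - Suc i = Suc j" "length xs - Suc (Suc i) = j"
    using i by (auto simp: j_def)
  have "{xs ! j, xs ! Suc j} \<in> E" using assms j(1) by (auto simp: walk_def)
  then show "{rev xs ! i, rev xs ! Suc i} \<in> E"
    using i j by (auto simp: rev_nth insert_commute)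
qed (use assms in \<open>auto simp: walk_def\<close>)

lemma hop_sym: "hop_reachable V E n x y \<Longrightarrow> hop_reachable V E n y x"
  unfolding hop_reachable_def
  by (metis walk_rev hd_rev last_rev length_rev walk_def)

lemma walk_mono: "walk V E xs \<Longrightarrow> E \<subseteq> F \<Longrightarrow> walk V F xs"
  by (auto simp: walk_def)

lemma dis_le_iff: "dis V E x y \<le> enat n \<longleftrightarrow> hop_reachable V E n x y"
proof
  assume "dis V E x y \<le> enat n"
  then have "dis V E x y < enat (Suc n)"
    by (meson enat_ord_simps(2) le_less_trans lessI)
  then obtain xs where "walk V E xs \<and> hd xs = x \<and> last xs = y" "enat (length xs - 1) < enat (Suc n)"
    unfolding dis_def by (auto simp: INF_less_iff)
  then show "hop_reachable V E n x y" unfolding hop_reachable_def by auto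
next
  assume "hop_reachable V E n x y"
  then obtain xs where "walk V E xs" "hd xs = x" "last xs = y" "length xs - 1 \<le> n"
    unfolding hop_reachable_def by auto
  then have "dis V E x y \<le> enat (length xs - 1)"
    unfolding dis_def by (intro INF_lower2[of xs]) auto
  then show "dis V E x y \<le> enat n" using \<open>length xs - 1 \<le> n\<close>
    by (meson enat_ord_simps(1) order_trans)
qed

lemma key:
  assumes "\<And>a. a \<in> {u,v} \<Longrightarrow> dis V E a x = dis V (E - {{u,v}}) a x"
  shows "walk V E ys \<Longrightarrow> last ys = x \<Longrightarrow>
    \<exists>zs. walk V (E - {{u,v}}) zs \<and> hd zs = hd ys \<and> last zs = x \<and> length zs \<le> length ys"
proof (induction ys)
  case Nil
  then show ?case by (simp add: walk_def)
next
  case (Cons a ys)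
  show ?case
  proof (cases ys)
    case Nil
    then show ?thesis using Cons.prems by (auto simp: walk_single intro!: exI[of _ "[a]"])
  next
    case (Cons b ys')
    show ?thesis
    proof (cases "a \<in> {u,v}")
      case True
      have "hop_reachable V E (length (a # ys) - 1) a x"
        unfolding hop_reachable_def using Cons.prems by (auto intro!: exI[of _ "a # ys"])
      then have "dis V E a x \<le> enat (length (a # ys) - 1)" by (simp add: dis_le_iff)
      then have "hop_reachable V (E - {{u,v}}) (length (a # ys) - 1) a x"
        using assms[OF True] by (simp add: dis_le_iff)
      then obtain zs where "walk V (E - {{u,v}}) zs" "hd zs = a" "last zs = x" "length zs - 1 \<le> length (a # ys) - 1"
        unfolding hop_reachable_def by auto
      moreover have "zs \<noteq> []" using \<open>walk V (E - {{u,v}}) zs\<close> by (simp add: walk_def)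
      ultimately show ?thesis by (intro exI[of _ zs]) auto
    next
      case False
      have w: "a \<in> V" "{a,b} \<in> E" "walk V E (b # ys')"
        using Cons.prems(1) \<open>ys = b # ys'\<close> by (auto simp: walk_Cons2)
      have ne: "{a,b} \<noteq> {u,v}" using False by auto
      obtain zs where zs: "walk V (E - {{u,v}}) zs" "hd zs = b" "last zs = x" "length zs \<le> length ys"
        using Cons.IH w(3) Cons.prems(2) \<open>ys = b # ys'\<close> by auto
      obtain zs' where zs': "zs = b # zs'" using zs(1,2) unfolding walk_def
        by (cases zs) auto
      have "walk V (E - {{u,v}}) (a # zs)"
        using zs zs' w ne by (simp add: walk_Cons2)
      then show ?thesis using zs zs' Cons.prems(2) by (auto intro!: exI[of _ "a # zs"])
    qed
  qed
qed

lemma hop_preserve: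
  assumes "dis V E u x = dis V (E - {{u,v}}) u x" "dis V E v x = dis V (E - {{u,v}}) v x"
    and "hop_reachable V E n x w"
  shows "hop_reachable V (E - {{u,v}}) n x w"
proof -
  from hop_sym[OF assms(3)] obtain ys where ys: "walk V E ys" "hd ys = w" "last ys = x" "length ys - 1 \<le> n"
    unfolding hop_reachable_def by auto
  have a: "\<And>a. a \<in> {u,v} \<Longrightarrow> dis V E a x = dis V (E - {{u,v}}) a x" using assms(1,2) by auto
  obtain zs where "walk V (E - {{u,v}}) zs \<and> hd zs = hd ys \<and> last zs = x \<and> length zs \<le> length ys"
    using key[OF a ys(1,3)] by blast
  then have "hop_reachable V (E - {{u,v}}) n w x"
    unfolding hop_reachable_def using ys by (auto intro!: exI[of _ zs])
  then show ?thesis by (rule hop_sym)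
qed

lemma hopN_eq:
  assumes "dis V E u x = dis V (E - {{u,v}}) u x" "dis V E v x = dis V (E - {{u,v}}) v x"
  shows "hopN V E n x = hopN V (E - {{u,v}}) n x"
proof -
  have "hop_reachable V (E - {{u,v}}) n x w \<Longrightarrow> hop_reachable V E n x w" for w
    unfolding hop_reachable_def using walk_mono[of V "E - {{u,v}}" _ E] by blast
  then show ?thesis unfolding hopN_def using hop_preserve[OF assms] by blast
qed

theorem lemma8:
  fixes V :: "'a set" and E :: "'a set set" and \<tau> :: nat and u v u' v' :: 'a
  assumes "simple_graph V E"
    and "\<tau> \<ge> 1"
    and "{u, v} \<in> E"
    and "{u', v'} \<in> E - {{u, v}}"
    and "u' \<in> Delta V E \<tau> u v" and "v' \<in> Delta V E \<tau> u v"
    and "dis V E u u' = dis V (E - {{u, v}}) u u'"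
    and "dis V E u v' = dis V (E - {{u, v}}) u v'"
    and "dis V E v u' = dis V (E - {{u, v}}) v u'"
    and "dis V E v v' = dis V (E - {{u, v}}) v v'"
  shows "sup_tau V E \<tau> u' v' = sup_tau V (E - {{u, v}}) \<tau> u' v'"
  unfolding sup_tau_def Delta_def
  using hopN_eq[OF assms(7,9)] hopN_eq[OF assms(8,10)] by simp

end
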